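(* Let $S$ be a finite set with labelling $\ell:S\to L$. For all transition functions $\sigma,\tau:S\to\mathcal{D}(S)$ and every $S^2_\Delta$-closed policy $P\in\mathcal{P}_\sigma$, there exists an $S^2_\Delta$-closed policy $Q\in\mathcal{P}_\tau$ such that $d_F(P,Q)\le 2\,d_F(\sigma,\tau)$.
   Context: $\mathcal{D}(Y)$ = probability distributions on $Y$; $\Omega(\mu,\nu)$ = couplings of $\mu,\nu$ (distributions on $S\times S$ with marginals $\mu,\nu$). $S^2_\Delta=\{(s,s)\mid s\in S\}$, $S^2_1=\{(s,t)\mid\ell(s)\ne\ell(t)\}$. For a transition function $\tau$, $\mathcal{P}_\tau$ is the set of maps $P:S\times S\to\mathcal{D}(S\times S)$ with $P(s,t)\in\Omega(\tau(s),\tau(t))$ for $(s,t)\notin S^2_1$ and $P(s,t)$ the point mass at $(s,t)$ for $(s,t)\in S^2_1$. $P$ is $S^2_\Delta$-closed if $\mathrm{support}(P(s,s))\subseteq S^2_\Delta$ for all $s$. For distributions $\alpha,\beta$ on a finite set $Y$, $d_{TV}(\alpha,\beta)=\max_{y}|\alpha(y)-\beta(y)|$; for functions $f,g$ with values in distributions, $d_F(f,g)=\max_x d_{TV}(f(x),g(x))$ (so $d_F(\sigma,\tau)=\max_{s}d_{TV}(\sigma(s),\tau(s))$ and $d_F(P,Q)=\max_{(s,t)}d_{TV}(P(s,t),Q(s,t))$). *)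

theory Defs
  imports "HOL-Probability.Probability"
begin

text \<open>The finite state set S is the universe of a finite type 's; the labelling is l :: 's => 'l.
  Distributions are pmfs.\<close>

definition couplings :: "'s pmf \<Rightarrow> 's pmf \<Rightarrow> ('s \<times> 's) pmf set" where
  "couplings \<mu> \<nu> = {p. map_pmf fst p = \<mu> \<and> map_pmf snd p = \<nu>}"

definition diag_pairs :: "('s \<times> 's) set" where
  "diag_pairs = {(s, s) | s. True}"

definition label_diff_pairs :: "('s \<Rightarrow> 'l) \<Rightarrow> ('s \<times> 's) set" where
  "label_diff_pairs l = {(s, t). l s \<noteq> l t}"

definition policies :: "('s \<Rightarrow> 'l) \<Rightarrow> ('s \<Rightarrow> 's pmf) \<Rightarrow> ('s \<times> 's \<Rightarrow> ('s \<times> 's) pmf) set" where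
  "policies l \<tau> = {P. \<forall>s t.
      ((s, t) \<notin> label_diff_pairs l \<longrightarrow> P (s, t) \<in> couplings (\<tau> s) (\<tau> t)) \<and>
      ((s, t) \<in> label_diff_pairs l \<longrightarrow> P (s, t) = return_pmf (s, t))}"

definition diag_closed :: "('s \<times> 's \<Rightarrow> ('s \<times> 's) pmf) \<Rightarrow> bool" where
  "diag_closed P \<longleftrightarrow> (\<forall>s. set_pmf (P (s, s)) \<subseteq> diag_pairs)"

definition d_TV :: "'a::finite pmf \<Rightarrow> 'a pmf \<Rightarrow> real" where
  "d_TV \<alpha> \<beta> = Max (range (\<lambda>y. \<bar>pmf \<alpha> y - pmf \<beta> y\<bar>))"

definition d_F :: "('x::finite \<Rightarrow> 'a::finite pmf) \<Rightarrow> ('x \<Rightarrow> 'a pmf) \<Rightarrow> real" where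
  "d_F f g = Max (range (\<lambda>x. d_TV (f x) (g x)))"

end

theory Submission
  imports Defs
begin

lemma pmf_embed_finite:
  fixes f :: "'a::finite \<Rightarrow> real"
  assumes "\<And>x. 0 \<le> f x" "(\<Sum>x\<in>UNIV. f x) = 1"
  shows "pmf (embed_pmf f) x = f x"
proof -
  have "(\<integral>\<^sup>+x. f x \<partial>count_space UNIV) = (\<Sum>x\<in>UNIV. ennreal (f x))"
    by (simp add: nn_integral_count_space_finite)
  also have "\<dots> = ennreal (\<Sum>x\<in>UNIV. f x)" using assms(1) by (simp add: sum_ennreal)
  finally show ?thesis using assms by (simp add: pmf_embed_pmf)
qed

lemma pmf_fst_sum:
  fixes p :: "('a::finite \<times> 'b::finite) pmf"
  shows "pmf (map_pmf fst p) x = (\<Sum>y\<in>UNIV. pmf p (x,y))"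
proof -
  have "pmf (map_pmf fst p) x = measure p (fst -` {x})" by (simp add: pmf_map)
  also have "\<dots> = sum (pmf p) ({x} \<times> UNIV)"
    by (simp add: measure_measure_pmf_finite vimage_fst)
  also have "\<dots> = (\<Sum>y\<in>UNIV. pmf p (x,y))"
    using sum.cartesian_product[of "\<lambda>a b. pmf p (a,b)" UNIV "{x}"] by (simp add: case_prod_beta')
  finally show ?thesis .
qed

lemma pmf_snd_sum:
  fixes p :: "('a::finite \<times> 'b::finite) pmf"
  shows "pmf (map_pmf snd p) y = (\<Sum>x\<in>UNIV. pmf p (x,y))"
proof -
  have "pmf (map_pmf snd p) y = measure p (snd -` {y})" by (simp add: pmf_map)
  also have "\<dots> = sum (pmf p) (UNIV \<times> {y})"
    by (simp add: measure_measure_pmf_finite vimage_snd)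
  also have "\<dots> = (\<Sum>x\<in>UNIV. pmf p (x,y))"
    using sum.cartesian_product[of "\<lambda>a b. pmf p (a,b)" "{y}" UNIV] by (simp add: case_prod_beta')
  finally show ?thesis .
qed

lemma sum_pmf_UNIV: "(\<Sum>x\<in>UNIV. pmf (p::'a::finite pmf) x) = 1"
  by (rule sum_pmf_eq_1) auto

lemma sum_if_eq: "(\<Sum>x'\<in>(UNIV::'a::finite set). if x = x' then (S::real) else 0) = S"
  by simp

lemma sum_mult_delta: "(\<Sum>y'\<in>(UNIV::'a::finite set). (f y'::real) * (if y = y' then 1 else 0)) = f y"
proof -
  have "(\<Sum>y'\<in>UNIV. f y' * (if y = y' then 1 else 0)) = (\<Sum>y'\<in>UNIV. if y = y' then f y' else 0)"
    by (rule sum.cong) auto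
  also have "\<dots> = f y" by (subst sum.delta') auto
  finally show ?thesis .
qed

definition mm :: "'a::finite pmf \<Rightarrow> 'a pmf \<Rightarrow> real" where
  "mm \<mu> \<nu> = (\<Sum>z\<in>UNIV. max 0 (pmf \<nu> z - pmf \<mu> z))"

definition kb :: "'a::finite pmf \<Rightarrow> 'a pmf \<Rightarrow> 'a \<Rightarrow> 'a \<Rightarrow> real" where
  "kb \<mu> \<nu> x' x = max 0 (pmf \<mu> x' - pmf \<nu> x') / pmf \<mu> x' * (max 0 (pmf \<nu> x - pmf \<mu> x) / mm \<mu> \<nu>)"

definition kk :: "'a::finite pmf \<Rightarrow> 'a pmf \<Rightarrow> 'a \<Rightarrow> 'a \<Rightarrow> real" where
  "kk \<mu> \<nu> x' x = (if x = x' then min (pmf \<mu> x') (pmf \<nu> x') / pmf \<mu> x' else 0) + kb \<mu> \<nu> x' x"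

lemma mm_nonneg: "0 \<le> mm \<mu> \<nu>"
  unfolding mm_def by (rule sum_nonneg) auto

lemma mm_sym: "(\<Sum>z\<in>UNIV. max 0 (pmf \<mu> z - pmf \<nu> z)) = mm \<mu> \<nu>"
proof -
  have "(\<Sum>z\<in>UNIV. max 0 (pmf \<mu> z - pmf \<nu> z)) - mm \<mu> \<nu>
      = (\<Sum>z\<in>UNIV. max 0 (pmf \<mu> z - pmf \<nu> z) - max 0 (pmf \<nu> z - pmf \<mu> z))"
    unfolding mm_def by (simp add: sum_subtractf)
  also have "\<dots> = (\<Sum>z\<in>UNIV. pmf \<mu> z - pmf \<nu> z)"
    by (rule sum.cong) auto
  also have "\<dots> = 0" by (simp add: sum_subtractf sum_pmf_UNIV)
  finally show ?thesis by simp
qed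

lemma kb_nonneg: "0 \<le> kb \<mu> \<nu> x' x"
  unfolding kb_def using mm_nonneg[of \<mu> \<nu>] by (auto intro!: mult_nonneg_nonneg divide_nonneg_nonneg)

lemma kk_nonneg: "0 \<le> kk \<mu> \<nu> x' x"
  unfolding kk_def using kb_nonneg[of \<mu> \<nu> x' x] by (auto intro!: divide_nonneg_nonneg)

lemma mm_zero_pos: "mm \<mu> \<nu> = 0 \<Longrightarrow> max 0 (pmf \<mu> z - pmf \<nu> z) = 0"
proof -
  assume "mm \<mu> \<nu> = 0"
  hence "(\<Sum>z\<in>UNIV. max 0 (pmf \<mu> z - pmf \<nu> z)) = 0" by (simp add: mm_sym)
  thus ?thesis by (subst (asm) sum_nonneg_eq_0_iff) auto
qed

lemma mm_zero_neg: "mm \<mu> \<nu> = 0 \<Longrightarrow> max 0 (pmf \<nu> z - pmf \<mu> z) = 0"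
proof -
  assume "mm \<mu> \<nu> = 0"
  thus ?thesis unfolding mm_def by (subst (asm) sum_nonneg_eq_0_iff) auto
qed

lemma kk_mul: "pmf \<mu> x' * kk \<mu> \<nu> x' x = (if x = x' then min (pmf \<mu> x') (pmf \<nu> x') else 0)
   + max 0 (pmf \<mu> x' - pmf \<nu> x') * (max 0 (pmf \<nu> x - pmf \<mu> x) / mm \<mu> \<nu>)"
proof (cases "pmf \<mu> x' = 0")
  case True
  then show ?thesis unfolding kk_def kb_def using pmf_nonneg[of \<nu> x'] by auto
next
  case False
  then show ?thesis unfolding kk_def kb_def by (simp add: field_simps)
qed

lemma kb_mul: "pmf \<mu> x' * kb \<mu> \<nu> x' x = max 0 (pmf \<mu> x' - pmf \<nu> x') * (max 0 (pmf \<nu> x - pmf \<mu> x) / mm \<mu> \<nu>)"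
proof (cases "pmf \<mu> x' = 0")
  case True
  then show ?thesis unfolding kb_def using pmf_nonneg[of \<nu> x'] by auto
next
  case False
  then show ?thesis unfolding kb_def by (simp add: field_simps)
qed

lemma kb_push: "(\<Sum>x'\<in>UNIV. pmf \<mu> x' * kb \<mu> \<nu> x' x) \<le> max 0 (pmf \<nu> x - pmf \<mu> x)"
proof -
  have "(\<Sum>x'\<in>UNIV. pmf \<mu> x' * kb \<mu> \<nu> x' x) = mm \<mu> \<nu> * (max 0 (pmf \<nu> x - pmf \<mu> x) / mm \<mu> \<nu>)"
    by (simp only: kb_mul flip: sum_distrib_right) (simp only: mm_sym)
  also have "\<dots> \<le> max 0 (pmf \<nu> x - pmf \<mu> x)"
    by (cases "mm \<mu> \<nu> = 0") auto
  finally show ?thesis .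
qed

lemma kk_push: "(\<Sum>x'\<in>UNIV. pmf \<mu> x' * kk \<mu> \<nu> x' x) = pmf \<nu> x"
proof -
  have "(\<Sum>x'\<in>UNIV. pmf \<mu> x' * kk \<mu> \<nu> x' x) = min (pmf \<mu> x) (pmf \<nu> x) + mm \<mu> \<nu> * (max 0 (pmf \<nu> x - pmf \<mu> x) / mm \<mu> \<nu>)"
  proof -
    have d: "(\<Sum>x'\<in>UNIV. (if x = x' then min (pmf \<mu> x') (pmf \<nu> x') else 0)) = min (pmf \<mu> x) (pmf \<nu> x)"
      by (subst sum.delta') auto
    show ?thesis
      by (simp only: kk_mul sum.distrib d flip: sum_distrib_right) (simp only: mm_sym)
  qed
  also have "\<dots> = pmf \<nu> x"
    using mm_zero_neg[of \<mu> \<nu> x] by (cases "mm \<mu> \<nu> = 0") auto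
  finally show ?thesis .
qed

lemma kk_rowsum: "pmf \<mu> x' > 0 \<Longrightarrow> (\<Sum>x\<in>UNIV. kk \<mu> \<nu> x' x) = 1"
proof -
  assume pos: "pmf \<mu> x' > 0"
  have "pmf \<mu> x' * (\<Sum>x\<in>UNIV. kk \<mu> \<nu> x' x) = (\<Sum>x\<in>UNIV. pmf \<mu> x' * kk \<mu> \<nu> x' x)"
    by (simp add: sum_distrib_left)
  also have "\<dots> = min (pmf \<mu> x') (pmf \<nu> x') + max 0 (pmf \<mu> x' - pmf \<nu> x') * (mm \<mu> \<nu> / mm \<mu> \<nu>)"
  proof -
    have d: "(\<Sum>x\<in>UNIV. (if x = x' then min (pmf \<mu> x') (pmf \<nu> x') else 0)) = min (pmf \<mu> x') (pmf \<nu> x')"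
      by (subst sum.delta) auto
    have e: "(\<Sum>x\<in>UNIV. max 0 (pmf \<nu> x - pmf \<mu> x) / mm \<mu> \<nu>) = mm \<mu> \<nu> / mm \<mu> \<nu>"
      by (simp only: mm_def flip: sum_divide_distrib)
    show ?thesis
      by (simp only: kk_mul sum.distrib d e flip: sum_distrib_left)
  qed
  also have "\<dots> = pmf \<mu> x'"
    using mm_zero_pos[of \<mu> \<nu> x'] by (cases "mm \<mu> \<nu> = 0") auto
  finally show ?thesis using pos by simp
qed

lemma kk_zero: "pmf \<mu> x' = 0 \<Longrightarrow> kk \<mu> \<nu> x' x = 0"
  unfolding kk_def kb_def by simp

lemma kk_le1: "kk \<mu> \<nu> x' x \<le> 1"
proof (cases "pmf \<mu> x' = 0")
  case True thus ?thesis by (simp add: kk_zero)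
next
  case False
  hence "pmf \<mu> x' > 0" using pmf_nonneg[of \<mu> x'] by linarith
  hence "(\<Sum>x\<in>UNIV. kk \<mu> \<nu> x' x) = 1" by (rule kk_rowsum)
  moreover have "kk \<mu> \<nu> x' x \<le> (\<Sum>x\<in>UNIV. kk \<mu> \<nu> x' x)"
    by (rule member_le_sum) (auto simp: kk_nonneg)
  ultimately show ?thesis by simp
qed

lemma kk_upper: "kk \<mu> \<nu> x' x \<le> (if x = x' then 1 else 0) + kb \<mu> \<nu> x' x"
proof -
  have "min (pmf \<mu> x') (pmf \<nu> x') / pmf \<mu> x' \<le> 1"
    by (cases "pmf \<mu> x' = 0") auto
  thus ?thesis unfolding kk_def by auto
qed

lemma kk_diag:
  assumes "0 \<le> q" "q \<le> pmf \<mu> x"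
  shows "q - max 0 (pmf \<mu> x - pmf \<nu> x) \<le> q * kk \<mu> \<nu> x x"
proof (cases "pmf \<mu> x = 0")
  case True
  then show ?thesis using assms by simp
next
  case False
  hence pos: "pmf \<mu> x > 0" using pmf_nonneg[of \<mu> x] by linarith
  have "q * kk \<mu> \<nu> x x \<ge> q * (min (pmf \<mu> x) (pmf \<nu> x) / pmf \<mu> x)"
    unfolding kk_def using kb_nonneg[of \<mu> \<nu> x x] assms by (simp add: distrib_left)
  moreover have "q * (min (pmf \<mu> x) (pmf \<nu> x) / pmf \<mu> x) = q - q * (max 0 (pmf \<mu> x - pmf \<nu> x) / pmf \<mu> x)"
    using pos by (simp add: field_simps min_def max_def)
  moreover have "q * (max 0 (pmf \<mu> x - pmf \<nu> x) / pmf \<mu> x) \<le> max 0 (pmf \<mu> x - pmf \<nu> x)"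
  proof -
    have "q / pmf \<mu> x \<le> 1" using pos assms by simp
    hence "(q / pmf \<mu> x) * max 0 (pmf \<mu> x - pmf \<nu> x) \<le> 1 * max 0 (pmf \<mu> x - pmf \<nu> x)"
      by (intro mult_right_mono) auto
    thus ?thesis by simp
  qed
  ultimately show ?thesis by argo
qed

definition qf :: "('a::finite \<times> 'a) pmf \<Rightarrow> 'a pmf \<Rightarrow> 'a pmf \<Rightarrow> 'a pmf \<Rightarrow> 'a pmf \<Rightarrow> 'a \<times> 'a \<Rightarrow> real" where
  "qf R \<mu>1 \<nu>1 \<mu>2 \<nu>2 p = (\<Sum>x'\<in>UNIV. \<Sum>y'\<in>UNIV. pmf R (x',y') * kk \<mu>1 \<nu>1 x' (fst p) * kk \<mu>2 \<nu>2 y' (snd p))"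

lemma qf_nonneg: "0 \<le> qf R \<mu>1 \<nu>1 \<mu>2 \<nu>2 p"
  unfolding qf_def by (intro sum_nonneg mult_nonneg_nonneg) (auto simp: kk_nonneg)

context
  fixes R :: "('a::finite \<times> 'a) pmf" and \<mu>1 \<nu>1 \<mu>2 \<nu>2 :: "'a pmf"
  assumes m1: "map_pmf fst R = \<mu>1" and m2: "map_pmf snd R = \<mu>2"
begin

lemma R_sum1: "(\<Sum>y\<in>UNIV. pmf R (x,y)) = pmf \<mu>1 x"
  using pmf_fst_sum[of R x] m1 by simp

lemma R_sum2: "(\<Sum>x\<in>UNIV. pmf R (x,y)) = pmf \<mu>2 y"
  using pmf_snd_sum[of R y] m2 by simp

lemma R_le1: "pmf R (x,y) \<le> pmf \<mu>1 x"
proof -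
  have "pmf R (x,y) \<le> (\<Sum>y\<in>UNIV. pmf R (x,y))" by (rule member_le_sum) auto
  thus ?thesis by (simp add: R_sum1)
qed

lemma R_le2: "pmf R (x,y) \<le> pmf \<mu>2 y"
proof -
  have "pmf R (x,y) \<le> (\<Sum>x\<in>UNIV. pmf R (x,y))" by (rule member_le_sum) auto
  thus ?thesis by (simp add: R_sum2)
qed

lemma R_row2: "pmf R (x',y') * (\<Sum>y\<in>UNIV. kk \<mu>2 \<nu>2 y' y) = pmf R (x',y')"
proof (cases "pmf \<mu>2 y' = 0")
  case True
  then have "pmf R (x',y') = 0" using R_le2[of x' y'] pmf_nonneg[of R "(x',y')"] by linarith
  thus ?thesis by simp
next
  case False
  hence "pmf \<mu>2 y' > 0" using pmf_nonneg[of \<mu>2 y'] by linarith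
  thus ?thesis by (simp add: kk_rowsum)
qed

lemma R_row1: "pmf R (x',y') * (\<Sum>x\<in>UNIV. kk \<mu>1 \<nu>1 x' x) = pmf R (x',y')"
proof (cases "pmf \<mu>1 x' = 0")
  case True
  then have "pmf R (x',y') = 0" using R_le1[of x' y'] pmf_nonneg[of R "(x',y')"] by linarith
  thus ?thesis by simp
next
  case False
  hence "pmf \<mu>1 x' > 0" using pmf_nonneg[of \<mu>1 x'] by linarith
  thus ?thesis by (simp add: kk_rowsum)
qed

lemma qf_fst: "(\<Sum>y\<in>UNIV. qf R \<mu>1 \<nu>1 \<mu>2 \<nu>2 (x,y)) = pmf \<nu>1 x"
proof -
  have "(\<Sum>y\<in>UNIV. qf R \<mu>1 \<nu>1 \<mu>2 \<nu>2 (x,y))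
     = (\<Sum>x'\<in>UNIV. \<Sum>y'\<in>UNIV. \<Sum>y\<in>UNIV. pmf R (x',y') * kk \<mu>1 \<nu>1 x' x * kk \<mu>2 \<nu>2 y' y)"
    unfolding qf_def fst_conv snd_conv
    by (subst sum.swap) (subst (2) sum.swap, rule refl)
  also have "\<dots> = (\<Sum>x'\<in>UNIV. \<Sum>y'\<in>UNIV. (pmf R (x',y') * (\<Sum>y\<in>UNIV. kk \<mu>2 \<nu>2 y' y)) * kk \<mu>1 \<nu>1 x' x)"
    by (simp add: sum_distrib_left sum_distrib_right mult_ac)
  also have "\<dots> = (\<Sum>x'\<in>UNIV. pmf \<mu>1 x' * kk \<mu>1 \<nu>1 x' x)"
    by (simp only: R_row2 R_sum1 flip: sum_distrib_right)
  also have "\<dots> = pmf \<nu>1 x" by (rule kk_push)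
  finally show ?thesis .
qed

lemma qf_snd: "(\<Sum>x\<in>UNIV. qf R \<mu>1 \<nu>1 \<mu>2 \<nu>2 (x,y)) = pmf \<nu>2 y"
proof -
  have "(\<Sum>x\<in>UNIV. qf R \<mu>1 \<nu>1 \<mu>2 \<nu>2 (x,y))
     = (\<Sum>y'\<in>UNIV. \<Sum>x'\<in>UNIV. \<Sum>x\<in>UNIV. pmf R (x',y') * kk \<mu>1 \<nu>1 x' x * kk \<mu>2 \<nu>2 y' y)"
    unfolding qf_def fst_conv snd_conv
    by (subst sum.swap) (subst (2) sum.swap, subst sum.swap, rule refl)
  also have "\<dots> = (\<Sum>y'\<in>UNIV. \<Sum>x'\<in>UNIV. (pmf R (x',y') * (\<Sum>x\<in>UNIV. kk \<mu>1 \<nu>1 x' x)) * kk \<mu>2 \<nu>2 y' y)"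
    by (simp add: sum_distrib_left sum_distrib_right mult_ac)
  also have "\<dots> = (\<Sum>y'\<in>UNIV. pmf \<mu>2 y' * kk \<mu>2 \<nu>2 y' y)"
    by (simp only: R_row1 R_sum2 flip: sum_distrib_right)
  also have "\<dots> = pmf \<nu>2 y" by (rule kk_push)
  finally show ?thesis .
qed

lemma qf_lower: "pmf R (x,y) - max 0 (pmf \<mu>1 x - pmf \<nu>1 x) - max 0 (pmf \<mu>2 y - pmf \<nu>2 y) \<le> qf R \<mu>1 \<nu>1 \<mu>2 \<nu>2 (x,y)"
proof -
  let ?t = "\<lambda>x' y'. pmf R (x',y') * kk \<mu>1 \<nu>1 x' x * kk \<mu>2 \<nu>2 y' y"
  have tn: "\<And>x' y'. 0 \<le> ?t x' y'" by (intro mult_nonneg_nonneg) (auto simp: kk_nonneg)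
  have "?t x y \<le> (\<Sum>y'\<in>UNIV. ?t x y')" by (rule member_le_sum) (auto simp: tn)
  also have "\<dots> \<le> (\<Sum>x'\<in>UNIV. \<Sum>y'\<in>UNIV. ?t x' y')"
    by (rule member_le_sum[where f="\<lambda>x'. \<Sum>y'\<in>UNIV. ?t x' y'"]) (auto intro!: sum_nonneg simp: tn)
  also have "\<dots> = qf R \<mu>1 \<nu>1 \<mu>2 \<nu>2 (x,y)" by (simp add: qf_def)
  finally have A: "?t x y \<le> qf R \<mu>1 \<nu>1 \<mu>2 \<nu>2 (x,y)" .
  have B: "pmf R (x,y) - max 0 (pmf \<mu>1 x - pmf \<nu>1 x) \<le> pmf R (x,y) * kk \<mu>1 \<nu>1 x x"
    by (rule kk_diag) (auto simp: R_le1)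
  have q0: "0 \<le> pmf R (x,y) * kk \<mu>1 \<nu>1 x x" by (simp add: kk_nonneg)
  have "pmf R (x,y) * kk \<mu>1 \<nu>1 x x \<le> pmf R (x,y) * 1"
    by (intro mult_left_mono) (auto simp: kk_le1)
  hence q1: "pmf R (x,y) * kk \<mu>1 \<nu>1 x x \<le> pmf \<mu>2 y" using R_le2[of x y] by simp
  have C: "pmf R (x,y) * kk \<mu>1 \<nu>1 x x - max 0 (pmf \<mu>2 y - pmf \<nu>2 y) \<le> ?t x y"
    using kk_diag[OF q0 q1, of \<nu>2] by simp
  show ?thesis using A B C by linarith
qed

lemma qf_upper: "qf R \<mu>1 \<nu>1 \<mu>2 \<nu>2 (x,y) \<le> pmf R (x,y) + max 0 (pmf \<nu>1 x - pmf \<mu>1 x) + max 0 (pmf \<nu>2 y - pmf \<mu>2 y)"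
proof -
  let ?t = "\<lambda>x' y'. pmf R (x',y') * kk \<mu>1 \<nu>1 x' x * kk \<mu>2 \<nu>2 y' y"
  let ?h = "\<lambda>y'. pmf R (x,y') * ((if y = y' then 1 else 0) + kb \<mu>2 \<nu>2 y' y)"
  have t: "?t x' y' \<le> (if x = x' then ?h y' else 0) + pmf R (x',y') * kb \<mu>1 \<nu>1 x' x" for x' y'
  proof -
    have r0: "0 \<le> pmf R (x',y')" by simp
    have k1: "kk \<mu>1 \<nu>1 x' x \<le> (if x = x' then 1 else 0) + kb \<mu>1 \<nu>1 x' x" by (rule kk_upper)
    have k2: "kk \<mu>2 \<nu>2 y' y \<le> (if y = y' then 1 else 0) + kb \<mu>2 \<nu>2 y' y" by (rule kk_upper)
    have k2': "kk \<mu>2 \<nu>2 y' y \<le> 1" by (rule kk_le1)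
    have n1: "0 \<le> kk \<mu>1 \<nu>1 x' x" "0 \<le> kk \<mu>2 \<nu>2 y' y" "0 \<le> kb \<mu>1 \<nu>1 x' x" by (simp_all add: kk_nonneg kb_nonneg)
    have "?t x' y' \<le> pmf R (x',y') * ((if x = x' then 1 else 0) + kb \<mu>1 \<nu>1 x' x) * kk \<mu>2 \<nu>2 y' y"
      using k1 r0 n1 by (intro mult_right_mono mult_left_mono) auto
    also have "\<dots> = (if x = x' then pmf R (x',y') * kk \<mu>2 \<nu>2 y' y else 0) + (pmf R (x',y') * kb \<mu>1 \<nu>1 x' x) * kk \<mu>2 \<nu>2 y' y"
      by (simp add: algebra_simps)
    also have "\<dots> \<le> (if x = x' then ?h y' else 0) + (pmf R (x',y') * kb \<mu>1 \<nu>1 x' x) * 1"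
    proof (rule add_mono)
      show "(if x = x' then pmf R (x',y') * kk \<mu>2 \<nu>2 y' y else 0) \<le> (if x = x' then ?h y' else 0)"
        using k2 r0 by (auto intro: mult_left_mono)
      show "(pmf R (x',y') * kb \<mu>1 \<nu>1 x' x) * kk \<mu>2 \<nu>2 y' y \<le> (pmf R (x',y') * kb \<mu>1 \<nu>1 x' x) * 1"
        using k2' r0 n1 by (intro mult_left_mono) auto
    qed
    finally show ?thesis by simp
  qed
  have "qf R \<mu>1 \<nu>1 \<mu>2 \<nu>2 (x,y) = (\<Sum>x'\<in>UNIV. \<Sum>y'\<in>UNIV. ?t x' y')" by (simp add: qf_def)
  also have "\<dots> \<le> (\<Sum>x'\<in>UNIV. \<Sum>y'\<in>UNIV. (if x = x' then ?h y' else 0) + pmf R (x',y') * kb \<mu>1 \<nu>1 x' x)"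
    by (intro sum_mono t)
  also have "\<dots> = (\<Sum>x'\<in>UNIV. (if x = x' then (\<Sum>y'\<in>UNIV. ?h y') else 0)) + (\<Sum>x'\<in>UNIV. (\<Sum>y'\<in>UNIV. pmf R (x',y')) * kb \<mu>1 \<nu>1 x' x)"
  proof -
    have c: "(\<Sum>x'\<in>UNIV. \<Sum>y'\<in>UNIV. (if x = x' then ?h y' else 0)) = (\<Sum>x'\<in>UNIV. (if x = x' then (\<Sum>y'\<in>UNIV. ?h y') else 0))"
      by (rule sum.cong) auto
    show ?thesis by (simp only: sum.distrib sum_distrib_right c)
  qed
  also have "\<dots> = (\<Sum>y'\<in>UNIV. ?h y') + (\<Sum>x'\<in>UNIV. pmf \<mu>1 x' * kb \<mu>1 \<nu>1 x' x)"
  proof -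
    have a: "(\<Sum>x'\<in>UNIV. (if x = x' then (\<Sum>y'\<in>UNIV. ?h y') else 0)) = (\<Sum>y'\<in>UNIV. ?h y')"
      by (rule sum_if_eq)
    have b: "(\<Sum>x'\<in>UNIV. (\<Sum>y'\<in>UNIV. pmf R (x',y')) * kb \<mu>1 \<nu>1 x' x) = (\<Sum>x'\<in>UNIV. pmf \<mu>1 x' * kb \<mu>1 \<nu>1 x' x)"
      by (simp only: R_sum1)
    show ?thesis by (simp only: a b)
  qed
  also have "(\<Sum>y'\<in>UNIV. ?h y') = pmf R (x,y) + (\<Sum>y'\<in>UNIV. pmf R (x,y') * kb \<mu>2 \<nu>2 y' y)"
    by (simp only: distrib_left sum.distrib sum_mult_delta[of "\<lambda>y'. pmf R (x,y')"])
  also have "(\<Sum>y'\<in>UNIV. pmf R (x,y') * kb \<mu>2 \<nu>2 y' y) \<le> (\<Sum>y'\<in>UNIV. pmf \<mu>2 y' * kb \<mu>2 \<nu>2 y' y)"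
    by (intro sum_mono mult_right_mono) (auto simp: R_le2 kb_nonneg)
  also note kb_push
  also note kb_push
  finally show ?thesis by simp
qed

end


lemma qf_sum1:
  assumes "map_pmf fst R = \<mu>1" "map_pmf snd R = \<mu>2"
  shows "(\<Sum>p\<in>UNIV. qf R \<mu>1 \<nu>1 \<mu>2 \<nu>2 p) = 1"
proof -
  have "(\<Sum>p\<in>UNIV. qf R \<mu>1 \<nu>1 \<mu>2 \<nu>2 p) = (\<Sum>p\<in>UNIV \<times> UNIV. qf R \<mu>1 \<nu>1 \<mu>2 \<nu>2 p)"
    by simp
  also have "\<dots> = (\<Sum>x\<in>UNIV. \<Sum>y\<in>UNIV. qf R \<mu>1 \<nu>1 \<mu>2 \<nu>2 (x,y))"
    by (subst sum.cartesian_product) simp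
  also have "\<dots> = (\<Sum>x\<in>UNIV. pmf \<nu>1 x)" using qf_fst[OF assms] by simp
  also have "\<dots> = 1" by (rule sum_pmf_UNIV)
  finally show ?thesis .
qed

lemma pmf_qQ:
  assumes "map_pmf fst R = \<mu>1" "map_pmf snd R = \<mu>2"
  shows "pmf (embed_pmf (qf R \<mu>1 \<nu>1 \<mu>2 \<nu>2)) p = qf R \<mu>1 \<nu>1 \<mu>2 \<nu>2 p"
  by (rule pmf_embed_finite) (auto simp: qf_nonneg qf_sum1[OF assms])

lemma qQ_coupling:
  assumes "map_pmf fst R = \<mu>1" "map_pmf snd R = \<mu>2"
  shows "embed_pmf (qf R \<mu>1 \<nu>1 \<mu>2 \<nu>2) \<in> couplings \<nu>1 \<nu>2"
  unfolding couplings_def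
proof (intro CollectI conjI pmf_eqI)
  fix x show "pmf (map_pmf fst (embed_pmf (qf R \<mu>1 \<nu>1 \<mu>2 \<nu>2))) x = pmf \<nu>1 x"
    by (simp add: pmf_fst_sum pmf_qQ[OF assms] qf_fst[OF assms])
next
  fix y show "pmf (map_pmf snd (embed_pmf (qf R \<mu>1 \<nu>1 \<mu>2 \<nu>2))) y = pmf \<nu>2 y"
    by (simp add: pmf_snd_sum pmf_qQ[OF assms] qf_snd[OF assms])
qed

lemma qQ_dist:
  assumes "map_pmf fst R = \<mu>1" "map_pmf snd R = \<mu>2"
    and "\<And>x. \<bar>pmf \<mu>1 x - pmf \<nu>1 x\<bar> \<le> D" "\<And>x. \<bar>pmf \<mu>2 x - pmf \<nu>2 x\<bar> \<le> D"
  shows "\<bar>pmf R p - pmf (embed_pmf (qf R \<mu>1 \<nu>1 \<mu>2 \<nu>2)) p\<bar> \<le> 2 * D"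
proof -
  obtain x y where p: "p = (x,y)" by fastforce
  have l: "pmf R (x,y) - max 0 (pmf \<mu>1 x - pmf \<nu>1 x) - max 0 (pmf \<mu>2 y - pmf \<nu>2 y) \<le> qf R \<mu>1 \<nu>1 \<mu>2 \<nu>2 (x,y)"
    by (rule qf_lower[OF assms(1,2)])
  have u: "qf R \<mu>1 \<nu>1 \<mu>2 \<nu>2 (x,y) \<le> pmf R (x,y) + max 0 (pmf \<nu>1 x - pmf \<mu>1 x) + max 0 (pmf \<nu>2 y - pmf \<mu>2 y)"
    by (rule qf_upper[OF assms(1,2)])
  have a: "\<bar>pmf \<mu>1 x - pmf \<nu>1 x\<bar> \<le> D" "\<bar>pmf \<mu>2 y - pmf \<nu>2 y\<bar> \<le> D" using assms(3,4) by auto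
  show ?thesis unfolding p pmf_qQ[OF assms(1,2)] using l u a by (simp add: abs_le_iff max_def split: if_splits) 
qed

lemma d_TV_le: "(\<And>y. \<bar>pmf a y - pmf b y\<bar> \<le> c) \<Longrightarrow> d_TV a b \<le> c"
  unfolding d_TV_def by (subst Max_le_iff) auto

lemma d_F_le: "(\<And>x. d_TV (f x) (g x) \<le> c) \<Longrightarrow> d_F f g \<le> c"
  unfolding d_F_def by (subst Max_le_iff) auto

lemma le_d_F: "\<bar>pmf (f s) x - pmf (g s) x\<bar> \<le> d_F f g"
proof -
  have "\<bar>pmf (f s) x - pmf (g s) x\<bar> \<le> d_TV (f s) (g s)"
    unfolding d_TV_def by (rule Max_ge) auto
  also have "\<dots> \<le> d_F f g" unfolding d_F_def by (rule Max_ge) auto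
  finally show ?thesis .
qed

lemma pmf_diag_map: "pmf (map_pmf (\<lambda>x. (x,x)) \<mu>) (x,y) = (if x = y then pmf \<mu> x else 0)"
proof (cases "x = y")
  case True
  have "inj (\<lambda>x. (x,x))" by (auto intro: injI)
  thus ?thesis using True pmf_map_inj'[of "\<lambda>x. (x,x)" \<mu> x] by simp
next
  case False
  hence "(x,y) \<notin> set_pmf (map_pmf (\<lambda>x. (x,x)) \<mu>)" by auto
  thus ?thesis using False by (simp add: set_pmf_eq)
qed

lemma diag_coupling: "map_pmf (\<lambda>x. (x,x)) \<mu> \<in> couplings \<mu> \<mu>"
  unfolding couplings_def by (simp add: pmf.map_comp o_def)


lemma pmf_diag_closed:
  fixes R :: "('a::finite \<times> 'a) pmf"
  assumes "set_pmf R \<subseteq> diag_pairs" "map_pmf fst R = \<mu>"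
  shows "pmf R (x,y) = (if x = y then pmf \<mu> x else 0)"
proof -
  have z: "pmf R (a,b) = 0" if "a \<noteq> b" for a b
  proof -
    have "(a,b) \<notin> set_pmf R" using assms(1) that unfolding diag_pairs_def by auto
    thus ?thesis by (simp add: set_pmf_eq)
  qed
  have "pmf \<mu> x = (\<Sum>y'\<in>UNIV. pmf R (x,y'))" using pmf_fst_sum[of R x] assms(2) by simp
  also have "\<dots> = (\<Sum>y'\<in>UNIV. if x = y' then pmf R (x,y') else 0)"
    by (rule sum.cong) (auto simp: z)
  also have "\<dots> = pmf R (x,x)" by (subst sum.delta') auto
  finally show ?thesis using z by auto
qed

definition Qpol :: "('s::finite \<Rightarrow> 'l) \<Rightarrow> ('s \<Rightarrow> 's pmf) \<Rightarrow> ('s \<Rightarrow> 's pmf) \<Rightarrow> ('s \<times> 's \<Rightarrow> ('s \<times> 's) pmf) \<Rightarrow> 's \<times> 's \<Rightarrow> ('s \<times> 's) pmf" where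
  "Qpol l \<sigma> \<tau> P st = (if l (fst st) \<noteq> l (snd st) then return_pmf st
     else if fst st = snd st then map_pmf (\<lambda>x. (x,x)) (\<tau> (fst st))
     else embed_pmf (qf (P st) (\<sigma> (fst st)) (\<tau> (fst st)) (\<sigma> (snd st)) (\<tau> (snd st))))"

theorem mainTheorem13:
  fixes l :: "'s::finite \<Rightarrow> 'l"
    and \<sigma> \<tau> :: "'s \<Rightarrow> 's pmf"
    and P :: "'s \<times> 's \<Rightarrow> ('s \<times> 's) pmf"
  assumes "P \<in> policies l \<sigma>"
    and "diag_closed P"
  shows "\<exists>Q. Q \<in> policies l \<tau> \<and> diag_closed Q \<and> d_F P Q \<le> 2 * d_F \<sigma> \<tau>"
proof (intro exI conjI)
  let ?Q = "Qpol l \<sigma> \<tau> P"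
  have Pc: "P (s,t) \<in> couplings (\<sigma> s) (\<sigma> t)" if "l s = l t" for s t
    using assms(1) that unfolding policies_def label_diff_pairs_def by auto
  have Pr: "P (s,t) = return_pmf (s,t)" if "l s \<noteq> l t" for s t
    using assms(1) that unfolding policies_def label_diff_pairs_def by auto
  show "?Q \<in> policies l \<tau>"
    unfolding policies_def label_diff_pairs_def
  proof (intro CollectI allI conjI impI)
    fix s t
    assume "(s,t) \<notin> {(s, t). l s \<noteq> l t}"
    hence st: "l s = l t" by simp
    show "?Q (s,t) \<in> couplings (\<tau> s) (\<tau> t)"
    proof (cases "s = t")
      case True thus ?thesis using st by (simp add: Qpol_def diag_coupling)
    next
      case False
      have "P (s,t) \<in> couplings (\<sigma> s) (\<sigma> t)" by (rule Pc[OF st])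
      hence "embed_pmf (qf (P (s,t)) (\<sigma> s) (\<tau> s) (\<sigma> t) (\<tau> t)) \<in> couplings (\<tau> s) (\<tau> t)"
        unfolding couplings_def by (intro qQ_coupling[unfolded couplings_def]) auto
      thus ?thesis using st False by (simp add: Qpol_def)
    qed
  next
    fix s t
    assume "(s,t) \<in> {(s, t). l s \<noteq> l t}"
    thus "?Q (s,t) = return_pmf (s,t)" by (simp add: Qpol_def)
  qed
  show "diag_closed ?Q"
    unfolding diag_closed_def diag_pairs_def by (auto simp: Qpol_def)
  let ?D = "d_F \<sigma> \<tau>"
  have D: "\<bar>pmf (\<sigma> s) x - pmf (\<tau> s) x\<bar> \<le> ?D" for s x by (rule le_d_F)
  have D0: "0 \<le> ?D" using D[of undefined undefined] by linarith
  show "d_F P ?Q \<le> 2 * ?D"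
  proof (rule d_F_le)
    fix st :: "'s \<times> 's"
    obtain s t where st: "st = (s,t)" by fastforce
    show "d_TV (P st) (?Q st) \<le> 2 * ?D"
    proof (rule d_TV_le)
      fix p :: "'s \<times> 's"
      obtain x y where p: "p = (x,y)" by fastforce
      show "\<bar>pmf (P st) p - pmf (?Q st) p\<bar> \<le> 2 * ?D"
      proof (cases "l s = l t")
        case False
        thus ?thesis using D0 by (simp add: st Qpol_def Pr)
      next
        case lt: True
        have c: "P (s,t) \<in> couplings (\<sigma> s) (\<sigma> t)" by (rule Pc[OF lt])
        show ?thesis
        proof (cases "s = t")
          case True
          have "set_pmf (P (s,s)) \<subseteq> diag_pairs" using assms(2) unfolding diag_closed_def by auto
          moreover have "map_pmf fst (P (s,s)) = \<sigma> s" using c True unfolding couplings_def by auto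
          ultimately have "pmf (P (s,s)) (x,y) = (if x = y then pmf (\<sigma> s) x else 0)"
            by (rule pmf_diag_closed)
          thus ?thesis using True D[of s x] D0 by (cases "x = y") (simp_all add: st p Qpol_def pmf_diag_map)
        next
          case False
          have "\<bar>pmf (P (s,t)) p - pmf (embed_pmf (qf (P (s,t)) (\<sigma> s) (\<tau> s) (\<sigma> t) (\<tau> t))) p\<bar> \<le> 2 * ?D"
            using c unfolding couplings_def by (intro qQ_dist D) auto
          thus ?thesis using lt False by (simp add: st Qpol_def)
        qed
      qed
    qed
  qed
qed

end
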